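(* Let $B=\{B_t,\ t\ge0\}$ be a centered Gaussian process with stationary increments and $B_0=0$, let $X_t=\theta t+B_t$, and let $h>0$. Assume that for every $N\ge1$ the Gaussian distribution of $(B_{kh})_{k=1}^N$ is nonsingular, and that $$\mathbb{E}\big[(B_{(k+1)h}-B_{kh})B_h\big]\to 0\quad\text{as }k\to\infty.$$ Let $\hat\theta^{(N)}$ be the maximum likelihood estimator of $\theta$ based on the observations $X_{kh}$, $k=1,\dots,N$, namely $$\hat\theta^{(N)}=\frac{z^\top(\Gamma^{(N)})^{-1}\Delta X^{(N)}}{z^\top(\Gamma^{(N)})^{-1}z},$$ with $z=(h,\dots,h)^\top\in\mathbb{R}^N$. Then $\hat\theta^{(N)}$ is mean-square consistent: $\mathbb{E}(\hat\theta^{(N)}-\theta)^2\to0$ as $N\to\infty$.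
   Context: Here $\Delta X^{(N)}=(X_{kh}-X_{(k-1)h})_{k=1}^N$, $\Delta B^{(N)}=(B_{kh}-B_{(k-1)h})_{k=1}^N$, and $\Gamma^{(N)}$ is the covariance matrix of $\Delta B^{(N)}$. *)

theory Defs
  imports "HOL-Probability.Probability" "Jordan_Normal_Form.Matrix" "Jordan_Normal_Form.Determinant"
begin

definition gaussian_rv :: "'a measure \<Rightarrow> ('a \<Rightarrow> real) \<Rightarrow> bool" where
  "gaussian_rv M X \<longleftrightarrow> X \<in> borel_measurable M \<and>
     ((\<exists>c. AE \<omega> in M. X \<omega> = c) \<or>
      (\<exists>\<mu> \<sigma>. \<sigma> > 0 \<and> distributed M lborel X (normal_density \<mu> \<sigma>)))"

definition gaussian_process :: "'a measure \<Rightarrow> (real \<Rightarrow> 'a \<Rightarrow> real) \<Rightarrow> bool" where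
  "gaussian_process M B \<longleftrightarrow>
     (\<forall>(n::nat) (t::nat \<Rightarrow> real) (c::nat \<Rightarrow> real). (\<forall>i<n. t i \<ge> 0) \<longrightarrow>
        gaussian_rv M (\<lambda>\<omega>. \<Sum>i<n. c i * B (t i) \<omega>))"

definition centered_process :: "'a measure \<Rightarrow> (real \<Rightarrow> 'a \<Rightarrow> real) \<Rightarrow> bool" where
  "centered_process M B \<longleftrightarrow> (\<forall>t\<ge>0. integrable M (B t) \<and> (\<integral>\<omega>. B t \<omega> \<partial>M) = 0)"

definition stationary_increments :: "'a measure \<Rightarrow> (real \<Rightarrow> 'a \<Rightarrow> real) \<Rightarrow> bool" where
  "stationary_increments M B \<longleftrightarrow>
     (\<forall>s\<ge>0. \<forall>(n::nat) (t::nat \<Rightarrow> real). (\<forall>i<n. t i \<ge> 0) \<longrightarrow>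
        distr M (PiM {..<n} (\<lambda>_. borel)) (\<lambda>\<omega>. \<lambda>i\<in>{..<n}. B (s + t i) \<omega> - B s \<omega>)
      = distr M (PiM {..<n} (\<lambda>_. borel)) (\<lambda>\<omega>. \<lambda>i\<in>{..<n}. B (t i) \<omega>))"

definition cov :: "'a measure \<Rightarrow> ('a \<Rightarrow> real) \<Rightarrow> ('a \<Rightarrow> real) \<Rightarrow> real" where
  "cov M X Y = (\<integral>\<omega>. (X \<omega> - (\<integral>\<eta>. X \<eta> \<partial>M)) * (Y \<omega> - (\<integral>\<eta>. Y \<eta> \<partial>M)) \<partial>M)"

text \<open>Covariance matrix of the random vector (Y 1, ..., Y N) (0-based matrix indices).\<close>
definition cov_matrix :: "'a measure \<Rightarrow> (nat \<Rightarrow> 'a \<Rightarrow> real) \<Rightarrow> nat \<Rightarrow> real mat" where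
  "cov_matrix M Y N = mat N N (\<lambda>(i, j). cov M (Y (Suc i)) (Y (Suc j)))"

definition grid_incr :: "(real \<Rightarrow> 'a \<Rightarrow> real) \<Rightarrow> real \<Rightarrow> nat \<Rightarrow> 'a \<Rightarrow> real" where
  "grid_incr Y h k \<omega> = Y (real k * h) \<omega> - Y ((real k - 1) * h) \<omega>"

definition Gamma_mat :: "'a measure \<Rightarrow> (real \<Rightarrow> 'a \<Rightarrow> real) \<Rightarrow> real \<Rightarrow> nat \<Rightarrow> real mat" where
  "Gamma_mat M B h N = cov_matrix M (grid_incr B h) N"

definition mat_inv :: "real mat \<Rightarrow> real mat" where
  "mat_inv A = (THE G. G \<in> carrier_mat (dim_row A) (dim_row A) \<and>
                   A * G = 1\<^sub>m (dim_row A) \<and> G * A = 1\<^sub>m (dim_row A))"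

definition mle_theta ::
  "'a measure \<Rightarrow> (real \<Rightarrow> 'a \<Rightarrow> real) \<Rightarrow> real \<Rightarrow> real \<Rightarrow> nat \<Rightarrow> 'a \<Rightarrow> real" where
  "mle_theta M B \<theta> h N \<omega> =
     (let X = (\<lambda>t \<omega>. \<theta> * t + B t \<omega>);
          G = mat_inv (Gamma_mat M B h N);
          z = vec N (\<lambda>_. h);
          dX = vec N (\<lambda>k. grid_incr X h (Suc k) \<omega>)
      in scalar_prod z (G *\<^sub>v dX) / scalar_prod z (G *\<^sub>v z))"

end

theory Submission
  imports Defs
begin
lemma gaussian_rv_sq:
  assumes "prob_space M" "gaussian_rv M X"
  shows "X \<in> borel_measurable M" "integrable M (\<lambda>\<omega>. (X \<omega>)^2)"
proof -
  interpret prob_space M by fact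
  show X: "X \<in> borel_measurable M" using assms(2) unfolding gaussian_rv_def by auto
  from assms(2) consider c where "AE \<omega> in M. X \<omega> = c"
    | \<mu> \<sigma> where "\<sigma> > 0" "distributed M lborel X (normal_density \<mu> \<sigma>)"
    unfolding gaussian_rv_def by auto
  then show "integrable M (\<lambda>\<omega>. (X \<omega>)^2)"
  proof cases
    case (1 c)
    have "integrable M (\<lambda>\<omega>. c^2)" by simp
    moreover have "AE \<omega> in M. c^2 = (X \<omega>)^2" using 1 by auto
    moreover have "(\<lambda>\<omega>. (X \<omega>)^2) \<in> borel_measurable M" using X by measurable
    ultimately show ?thesis by (subst integrable_cong_AE[where g="\<lambda>_. c^2"]) auto
  next
    case (2 \<mu> \<sigma>)
    have e: "\<And>x. normal_density \<mu> \<sigma> x * x^2 = normal_density \<mu> \<sigma> x * (x - \<mu>)^2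
       + 2 * \<mu> * (normal_density \<mu> \<sigma> x * (x - \<mu>)^1) + \<mu>^2 * normal_density \<mu> \<sigma> x"
      by (simp add: power2_eq_square algebra_simps)
    have i: "integrable lborel (\<lambda>x. normal_density \<mu> \<sigma> x * x^2)"
      unfolding e by (intro Bochner_Integration.integrable_add Bochner_Integration.integrable_mult_right integrable_normal_moment integrable_normal_density) (use 2 in auto)
    have "integrable lborel (\<lambda>x. normal_density \<mu> \<sigma> x * x^2) \<longleftrightarrow> integrable M (\<lambda>x. (X x)^2)"
      by (rule distributed_integrable[OF 2(2)]) auto
    then show ?thesis using i by simp
  qed
qed
lemma sqint_mult:
  fixes X Y :: "'a \<Rightarrow> real"
  assumes "X \<in> borel_measurable M" "Y \<in> borel_measurable M"
    "integrable M (\<lambda>\<omega>. (X \<omega>)^2)" "integrable M (\<lambda>\<omega>. (Y \<omega>)^2)"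
  shows "integrable M (\<lambda>\<omega>. X \<omega> * Y \<omega>)"
proof (rule Bochner_Integration.integrable_bound[where f="\<lambda>\<omega>. (X \<omega>)^2 + (Y \<omega>)^2"])
  show "integrable M (\<lambda>\<omega>. (X \<omega>)^2 + (Y \<omega>)^2)" using assms by auto
  show "(\<lambda>\<omega>. X \<omega> * Y \<omega>) \<in> borel_measurable M" using assms by measurable
  have "\<And>x y::real. \<bar>x * y\<bar> \<le> \<bar>x^2 + y^2\<bar>"
  proof -
    fix x y :: real
    have "0 \<le> (\<bar>x\<bar> - \<bar>y\<bar>)^2" by simp
    then have "2 * (\<bar>x\<bar> * \<bar>y\<bar>) \<le> x^2 + y^2" by (simp add: power2_eq_square algebra_simps)
    moreover have "0 \<le> \<bar>x\<bar> * \<bar>y\<bar>" by simp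
    ultimately show "\<bar>x * y\<bar> \<le> \<bar>x^2 + y^2\<bar>" by (simp add: abs_mult; linarith)
  qed
  then show "AE \<omega> in M. norm (X \<omega> * Y \<omega>) \<le> norm ((X \<omega>)^2 + (Y \<omega>)^2)" by auto
qed

lemma E_bilin:
  fixes X :: "nat \<Rightarrow> 'a \<Rightarrow> real"
  assumes fin: "finite I" and m: "\<And>i. i \<in> I \<Longrightarrow> X i \<in> borel_measurable M"
    and sq: "\<And>i. i \<in> I \<Longrightarrow> integrable M (\<lambda>\<omega>. (X i \<omega>)^2)"
  shows "integrable M (\<lambda>\<omega>. (\<Sum>i\<in>I. a i * X i \<omega>) * (\<Sum>j\<in>I. b j * X j \<omega>))"
    "(\<integral>\<omega>. (\<Sum>i\<in>I. a i * X i \<omega>) * (\<Sum>j\<in>I. b j * X j \<omega>) \<partial>M)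
     = (\<Sum>i\<in>I. \<Sum>j\<in>I. a i * b j * (\<integral>\<omega>. X i \<omega> * X j \<omega> \<partial>M))"
proof -
  have e: "\<And>\<omega>. (\<Sum>i\<in>I. a i * X i \<omega>) * (\<Sum>j\<in>I. b j * X j \<omega>)
     = (\<Sum>i\<in>I. \<Sum>j\<in>I. a i * b j * (X i \<omega> * X j \<omega>))"
    by (simp add: sum_product algebra_simps)
  have ii: "\<And>i j. i \<in> I \<Longrightarrow> j \<in> I \<Longrightarrow> integrable M (\<lambda>\<omega>. X i \<omega> * X j \<omega>)"
    using sqint_mult m sq by blast
  show "integrable M (\<lambda>\<omega>. (\<Sum>i\<in>I. a i * X i \<omega>) * (\<Sum>j\<in>I. b j * X j \<omega>))"
    unfolding e using ii by (intro Bochner_Integration.integrable_sum Bochner_Integration.integrable_mult_right) auto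
  show "(\<integral>\<omega>. (\<Sum>i\<in>I. a i * X i \<omega>) * (\<Sum>j\<in>I. b j * X j \<omega>) \<partial>M)
     = (\<Sum>i\<in>I. \<Sum>j\<in>I. a i * b j * (\<integral>\<omega>. X i \<omega> * X j \<omega> \<partial>M))"
    unfolding e using ii
    by (simp add: Bochner_Integration.integral_sum Bochner_Integration.integrable_sum)
qed

lemma stat_prod:
  fixes B :: "real \<Rightarrow> 'a \<Rightarrow> real"
  assumes si: "stationary_increments M B" and meas: "\<And>t. t \<ge> 0 \<Longrightarrow> B t \<in> borel_measurable M"
    and "s \<ge> 0" "a \<ge> 0" "b \<ge> 0" "c \<ge> 0"
  shows "(\<integral>\<omega>. (B (s+a) \<omega> - B (s+b) \<omega>) * (B (s+c) \<omega> - B s \<omega>) \<partial>M)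
       = (\<integral>\<omega>. (B a \<omega> - B b \<omega>) * B c \<omega> \<partial>M)"
proof -
  define t where "t = (\<lambda>i::nat. if i = 0 then a else if i = 1 then b else c)"
  have tp: "\<forall>i<3. t i \<ge> 0" using assms unfolding t_def by auto
  let ?P = "PiM {..<3::nat} (\<lambda>_. borel :: real measure)"
  have eq: "distr M ?P (\<lambda>\<omega>. \<lambda>i\<in>{..<3}. B (s + t i) \<omega> - B s \<omega>)
      = distr M ?P (\<lambda>\<omega>. \<lambda>i\<in>{..<3}. B (t i) \<omega>)"
    using si tp \<open>s \<ge> 0\<close> unfolding stationary_increments_def by blast
  define f where "f = (\<lambda>v::nat \<Rightarrow> real. (v 0 - v 1) * v 2)"
  have fm: "f \<in> borel_measurable ?P" unfolding f_def by measurable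
  have g1: "(\<lambda>\<omega>. \<lambda>i\<in>{..<3}. B (s + t i) \<omega> - B s \<omega>) \<in> measurable M ?P"
    by (rule measurable_restrict) (use meas tp \<open>s \<ge> 0\<close> in auto)
  have g2: "(\<lambda>\<omega>. \<lambda>i\<in>{..<3}. B (t i) \<omega>) \<in> measurable M ?P"
    by (rule measurable_restrict) (use meas tp in auto)
  have "integral\<^sup>L (distr M ?P (\<lambda>\<omega>. \<lambda>i\<in>{..<3}. B (s + t i) \<omega> - B s \<omega>)) f
      = integral\<^sup>L (distr M ?P (\<lambda>\<omega>. \<lambda>i\<in>{..<3}. B (t i) \<omega>)) f" using eq by simp
  then show ?thesis
    unfolding integral_distr[OF g1 fm] integral_distr[OF g2 fm]
    by (simp add: f_def t_def)
qed

lemma mat_inv_props: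
  fixes A :: "real mat"
  assumes A: "A \<in> carrier_mat n n" and d: "det A \<noteq> 0"
  shows "mat_inv A \<in> carrier_mat n n" "A * mat_inv A = 1\<^sub>m n" "mat_inv A * A = 1\<^sub>m n"
proof -
  have "A \<in> Units (ring_mat TYPE(real) n ())" by (rule det_non_zero_imp_unit[OF A d])
  then obtain G where G: "G \<in> carrier_mat n n" "G * A = 1\<^sub>m n" "A * G = 1\<^sub>m n"
    unfolding Units_def ring_mat_def by auto
  have dr: "dim_row A = n" using A by auto
  have uniq: "G' = G" if "G' \<in> carrier_mat n n" "A * G' = 1\<^sub>m n" "G' * A = 1\<^sub>m n" for G'
  proof -
    have "G' = G' * 1\<^sub>m n" using that(1) by simp
    also have "\<dots> = G' * (A * G)" using G(3) by simp
    also have "\<dots> = (G' * A) * G" using assoc_mult_mat[OF that(1) A G(1)] by simp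
    also have "\<dots> = G" using that(3) G(1) by simp
    finally show ?thesis .
  qed
  have "mat_inv A = G" unfolding mat_inv_def dr
  proof (rule the_equality)
    show "G \<in> carrier_mat n n \<and> A * G = 1\<^sub>m n \<and> G * A = 1\<^sub>m n" using G by simp
    fix G' assume "G' \<in> carrier_mat n n \<and> A * G' = 1\<^sub>m n \<and> G' * A = 1\<^sub>m n"
    then show "G' = G" using uniq by blast
  qed
  then show "mat_inv A \<in> carrier_mat n n" "A * mat_inv A = 1\<^sub>m n" "mat_inv A * A = 1\<^sub>m n" using G by auto
qed


lemma sp_lemma:
  fixes G :: "real mat"
  assumes "G \<in> carrier_mat N N"
  shows "scalar_prod (vec N (\<lambda>_. h)) (G *\<^sub>v vec N f) = (\<Sum>j<N. (\<Sum>i<N. h * G $$ (i,j)) * f j)"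
proof -
  have "scalar_prod (vec N (\<lambda>_. h)) (G *\<^sub>v vec N f) = (\<Sum>i<N. \<Sum>j<N. h * G $$ (i,j) * f j)"
    using assms by (simp add: scalar_prod_def atLeast0LessThan sum_distrib_left mult.assoc)
  also have "\<dots> = (\<Sum>j<N. (\<Sum>i<N. h * G $$ (i,j)) * f j)"
    by (subst sum.swap) (simp add: sum_distrib_right)
  finally show ?thesis .
qed

lemma cs_real:
  fixes A B C :: real
  assumes "\<And>t. 0 \<le> A + 2 * t * B + t^2 * C"
  shows "B^2 \<le> A * C"
proof (cases "C = 0")
  case True
  have "B = 0"
  proof (rule ccontr)
    assume "B \<noteq> 0"
    have "0 \<le> A + 2 * (- (A + 1) / (2 * B)) * B" using assms[of "- (A + 1) / (2 * B)"] True by simp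
    also have "\<dots> = -1" using \<open>B \<noteq> 0\<close> by (simp add: field_simps)
    finally show False by simp
  qed
  then show ?thesis using True by simp
next
  case False
  have C: "C > 0"
  proof (rule ccontr)
    assume "\<not> C > 0" then have "C < 0" using False by simp
    define K where "K = \<bar>A\<bar> + 2 * \<bar>B\<bar> + 1"
    define t where "t = K / (- C) + 1"
    have K0: "K \<ge> 0" unfolding K_def by simp
    have t1: "t \<ge> 1" using \<open>C < 0\<close> K0 by (simp add: t_def divide_nonneg_neg)
    have tC: "t * C \<le> - K" using \<open>C < 0\<close> by (simp add: t_def field_simps)
    have "t^2 * C = t * (t * C)" by (simp add: power2_eq_square)
    also have "\<dots> \<le> t * (- K)" using tC t1 by (intro mult_left_mono) auto
    finally have e: "t^2 * C \<le> - t * (\<bar>A\<bar> + 2 * \<bar>B\<bar> + 1)" by (simp add: K_def algebra_simps)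
    have "2 * t * B \<le> t * (2 * \<bar>B\<bar>)" using t1 by (simp add: mult_left_mono)
    moreover have "A \<le> t * \<bar>A\<bar>"
    proof -
      have "1 * \<bar>A\<bar> \<le> t * \<bar>A\<bar>" by (rule mult_right_mono[OF t1 abs_ge_zero])
      then show ?thesis by simp
    qed
    ultimately have "A + 2 * t * B + t^2 * C \<le> - t" using e by (simp add: algebra_simps)
    then show False using assms[of t] t1 by simp
  qed
  have "0 \<le> A + 2 * (- B / C) * B + (- B / C)^2 * C" by (rule assms)
  also have "\<dots> = A - B^2 / C" using C by (simp add: field_simps power2_eq_square)
  finally show ?thesis using C by (simp add: field_simps)
qed

lemma quad_expand:
  fixes E :: "nat \<Rightarrow> nat \<Rightarrow> real"
  assumes sym: "\<And>i j. E i j = E j i"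
  shows "(\<Sum>i<N. \<Sum>j<N. (a i + t * b i) * (a j + t * b j) * E i j)
     = (\<Sum>i<N. \<Sum>j<N. a i * a j * E i j) + 2 * t * (\<Sum>i<N. \<Sum>j<N. a i * b j * E i j)
       + t^2 * (\<Sum>i<N. \<Sum>j<N. b i * b j * E i j)"
proof -
  have sw: "(\<Sum>i<N. \<Sum>j<N. b i * a j * E i j) = (\<Sum>i<N. \<Sum>j<N. a i * b j * E i j)"
    by (subst sum.swap) (simp add: sym mult.commute)
  have "\<And>i j. (a i + t * b i) * (a j + t * b j) * E i j = a i * a j * E i j + t * (a i * b j * E i j)
      + t * (b i * a j * E i j) + t^2 * (b i * b j * E i j)"
    by (simp add: algebra_simps power2_eq_square)
  then have "(\<Sum>i<N. \<Sum>j<N. (a i + t * b i) * (a j + t * b j) * E i j)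
     = (\<Sum>i<N. \<Sum>j<N. a i * a j * E i j) + t * (\<Sum>i<N. \<Sum>j<N. a i * b j * E i j)
       + t * (\<Sum>i<N. \<Sum>j<N. b i * a j * E i j) + t^2 * (\<Sum>i<N. \<Sum>j<N. b i * b j * E i j)"
    by (simp add: sum.distrib sum_distrib_left)
  then show ?thesis using sw by simp
qed


lemma cesaro0:
  fixes b :: "nat \<Rightarrow> real"
  assumes b0: "\<And>k. b k \<ge> 0" and lim: "b \<longlonglongrightarrow> 0"
  shows "(\<lambda>N. (\<Sum>k<N. b k) / real N) \<longlonglongrightarrow> 0"
proof (rule LIMSEQ_I)
  fix \<epsilon> :: real assume e: "\<epsilon> > 0"
  then have "\<epsilon>/2 > 0" by simp
  from LIMSEQ_D[OF lim this] obtain K where K: "\<And>k. k \<ge> K \<Longrightarrow> norm (b k - 0) < \<epsilon>/2" by blast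
  have Kb: "b k \<le> \<epsilon>/2" if "K \<le> k" for k
  proof -
    have "norm (b k - 0) < \<epsilon>/2" by (rule K[OF that])
    then show ?thesis using b0[of k] by simp
  qed
  define C where "C = (\<Sum>k<K. b k)"
  obtain N0 :: nat where N0: "real N0 > 2 * C / \<epsilon>" using reals_Archimedean2 by blast
  show "\<exists>no. \<forall>n\<ge>no. norm ((\<Sum>k<n. b k) / real n - 0) < \<epsilon>"
  proof (intro exI[of _ "max (Suc N0) K"] allI impI)
    fix n assume n: "max (Suc N0) K \<le> n"
    have npos: "real n > 0" using n by simp
    have "(\<Sum>k<n. b k) = (\<Sum>k\<in>{0..<K}. b k) + (\<Sum>k\<in>{K..<n}. b k)"
      unfolding atLeast0LessThan[symmetric] by (rule sum.atLeastLessThan_concat[symmetric]) (use n in auto)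
    also have "(\<Sum>k\<in>{0..<K}. b k) = C" unfolding C_def atLeast0LessThan ..
    also have "(\<Sum>k\<in>{K..<n}. b k) \<le> real (card {K..<n}) * (\<epsilon>/2)"
      by (rule sum_bounded_above) (use Kb in auto)
    also have "real (card {K..<n}) * (\<epsilon>/2) \<le> real n * (\<epsilon>/2)"
      using e by (intro mult_right_mono) auto
    finally have A: "(\<Sum>k<n. b k) \<le> C + real n * (\<epsilon>/2)" by simp
    have "2 * C / \<epsilon> < real n" using N0 n by linarith
    then have "C < real n * (\<epsilon>/2)" using e by (simp add: field_simps)
    with A have "(\<Sum>k<n. b k) < real n * \<epsilon>" by simp
    then have "(\<Sum>k<n. b k) / real n < \<epsilon>" using npos by (simp add: field_simps)
    moreover have "(\<Sum>k<n. b k) / real n \<ge> 0" using b0 by (simp add: sum_nonneg)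
    ultimately show "norm ((\<Sum>k<n. b k) / real n - 0) < \<epsilon>" by simp
  qed
qed

lemma sum_inj_le:
  fixes b :: "nat \<Rightarrow> real"
  assumes inj: "inj_on g A" and im: "g ` A \<subseteq> {..<N}" and b0: "\<And>k. b k \<ge> 0"
  shows "(\<Sum>j\<in>A. b (g j)) \<le> (\<Sum>k<N. b k)"
proof -
  have "(\<Sum>j\<in>A. b (g j)) = sum b (g ` A)" by (simp add: sum.reindex[OF inj])
  also have "\<dots> \<le> (\<Sum>k<N. b k)" by (rule sum_mono2) (use im b0 in auto)
  finally show ?thesis .
qed

lemma dist_sum:
  fixes b :: "nat \<Rightarrow> real"
  assumes b0: "\<And>k. b k \<ge> 0" and i: "i < N"
  shows "(\<Sum>j<N. b (if j \<le> i then i - j else j - i)) \<le> 2 * (\<Sum>k<N. b k)"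
proof -
  have "(\<Sum>j<N. b (if j \<le> i then i - j else j - i))
     = (\<Sum>j<N. if j \<le> i then b (i - j) else 0) + (\<Sum>j<N. if \<not> j \<le> i then b (j - i) else 0)"
    by (subst sum.distrib[symmetric]) (intro sum.cong refl, auto)
  also have "(\<Sum>j<N. if j \<le> i then b (i - j) else 0) = (\<Sum>j\<in>{j\<in>{..<N}. j \<le> i}. b (i - j))"
    by (rule sum.inter_filter[symmetric]) simp
  also have "\<dots> \<le> (\<Sum>k<N. b k)"
    by (rule sum_inj_le[OF _ _ b0]) (use i in \<open>auto simp: inj_on_def\<close>)
  also have "(\<Sum>j<N. if \<not> j \<le> i then b (j - i) else 0) = (\<Sum>j\<in>{j\<in>{..<N}. \<not> j \<le> i}. b (j - i))"
    by (rule sum.inter_filter[symmetric]) simp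
  also have "\<dots> \<le> (\<Sum>k<N. b k)"
    by (rule sum_inj_le[OF _ _ b0]) (auto simp: inj_on_def)
  finally show ?thesis by simp
qed

lemma double_bound:
  fixes b :: "nat \<Rightarrow> real"
  assumes b0: "\<And>k. b k \<ge> 0"
  shows "(\<Sum>i<N. \<Sum>j<N. b (if j \<le> i then i - j else j - i)) \<le> 2 * real N * (\<Sum>k<N. b k)"
proof -
  have "(\<Sum>i<N. \<Sum>j<N. b (if j \<le> i then i - j else j - i)) \<le> (\<Sum>i<N. 2 * (\<Sum>k<N. b k))"
    by (rule sum_mono) (use dist_sum b0 in auto)
  then show ?thesis by simp
qed

locale gsetup =
  fixes M :: "'a measure" and B :: "real \<Rightarrow> 'a \<Rightarrow> real" and h :: real
  assumes ps: "prob_space M" and gp: "gaussian_process M B" and cent: "centered_process M B"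
    and si: "stationary_increments M B" and B0: "\<forall>\<omega>\<in>space M. B 0 \<omega> = 0" and hpos: "h > 0"
begin

lemma Bgauss: "t \<ge> 0 \<Longrightarrow> gaussian_rv M (B t)"
  using gp[unfolded gaussian_process_def, rule_format, of 1 "\<lambda>_. t" "\<lambda>_. 1"] by simp

lemma Bm: "t \<ge> 0 \<Longrightarrow> B t \<in> borel_measurable M"
  using gaussian_rv_sq[OF ps Bgauss] by blast

lemma Bsq: "t \<ge> 0 \<Longrightarrow> integrable M (\<lambda>\<omega>. (B t \<omega>)^2)"
  using gaussian_rv_sq[OF ps Bgauss] by blast

lemma Bint: "t \<ge> 0 \<Longrightarrow> integrable M (B t)" "t \<ge> 0 \<Longrightarrow> (\<integral>\<omega>. B t \<omega> \<partial>M) = 0"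
  using cent unfolding centered_process_def by auto

lemma Dt: "grid_incr B h (Suc i) = (\<lambda>\<omega>. B (real (Suc i) * h) \<omega> - B (real i * h) \<omega>)"
  by (rule ext) (simp add: grid_incr_def)

lemma Dgauss: "gaussian_rv M (grid_incr B h (Suc i))"
proof -
  have "gaussian_rv M (\<lambda>\<omega>. \<Sum>k<(2::nat). (if k = 0 then 1 else -1) * B (if k = 0 then real (Suc i) * h else real i * h) \<omega>)"
    using gp[unfolded gaussian_process_def, rule_format, of 2 "\<lambda>k. if k = 0 then real (Suc i) * h else real i * h"
      "\<lambda>k. if k = 0 then 1 else -1"] hpos by simp
  then show ?thesis unfolding Dt by (simp add: numeral_2_eq_2)
qed

lemma Dm: "grid_incr B h (Suc i) \<in> borel_measurable M"
  using gaussian_rv_sq[OF ps Dgauss] by blast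

lemma Dsq: "integrable M (\<lambda>\<omega>. (grid_incr B h (Suc i) \<omega>)^2)"
  using gaussian_rv_sq[OF ps Dgauss] by blast

lemma Dmean: "(\<integral>\<omega>. grid_incr B h (Suc i) \<omega> \<partial>M) = 0"
  unfolding Dt using Bint hpos by simp

definition EE :: "nat \<Rightarrow> nat \<Rightarrow> real" where
  "EE i j = (\<integral>\<omega>. grid_incr B h (Suc i) \<omega> * grid_incr B h (Suc j) \<omega> \<partial>M)"

definition r :: "nat \<Rightarrow> real" where
  "r k = (\<integral>\<omega>. (B (real (Suc k) * h) \<omega> - B (real k * h) \<omega>) * B h \<omega> \<partial>M)"

lemma EE_sym: "EE i j = EE j i"
  unfolding EE_def by (simp add: mult.commute)

lemma Gamma_entry: "i < N \<Longrightarrow> j < N \<Longrightarrow> Gamma_mat M B h N $$ (i,j) = EE i j"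
  unfolding Gamma_mat_def cov_matrix_def cov_def EE_def by (simp add: Dmean)

lemma Gamma_carrier: "Gamma_mat M B h N \<in> carrier_mat N N"
  unfolding Gamma_mat_def cov_matrix_def by simp

lemma EE_r_le: assumes "j \<le> i" shows "EE i j = r (i - j)"
proof -
  have m: "\<And>t. t \<ge> 0 \<Longrightarrow> B t \<in> borel_measurable M" using Bm by blast
  have "(\<integral>\<omega>. (B (real j * h + real (Suc (i-j)) * h) \<omega> - B (real j * h + real (i-j) * h) \<omega>)
        * (B (real j * h + h) \<omega> - B (real j * h) \<omega>) \<partial>M)
      = (\<integral>\<omega>. (B (real (Suc (i-j)) * h) \<omega> - B (real (i-j) * h) \<omega>) * B h \<omega> \<partial>M)"
    by (rule stat_prod[OF si m]) (use hpos in auto)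
  moreover have "real j * h + real (Suc (i-j)) * h = real (Suc i) * h"
     "real j * h + real (i-j) * h = real i * h" "real j * h + h = real (Suc j) * h"
    using assms by (simp_all add: of_nat_diff algebra_simps)
  ultimately show ?thesis unfolding EE_def r_def Dt by simp
qed

lemma EE_r: "EE i j = r (if j \<le> i then i - j else j - i)"
proof (cases "j \<le> i")
  case True then show ?thesis using EE_r_le by simp
next
  case False then show ?thesis using EE_r_le[of i j] EE_sym[of i j] by simp
qed

lemma EE_psd: "0 \<le> (\<Sum>i<N. \<Sum>j<N. a i * a j * EE i j)"
proof -
  have "(\<Sum>i<N. \<Sum>j<N. a i * a j * EE i j)
     = (\<integral>\<omega>. (\<Sum>i<N. a i * grid_incr B h (Suc i) \<omega>) * (\<Sum>j<N. a j * grid_incr B h (Suc j) \<omega>) \<partial>M)"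
    unfolding EE_def by (rule E_bilin(2)[symmetric]) (auto intro: Dm Dsq)
  also have "\<dots> \<ge> 0" by (rule integral_nonneg_AE) auto
  finally show ?thesis .
qed

definition Lm :: "nat \<Rightarrow> real mat" where
  "Lm N = mat N N (\<lambda>(i,a). if a = i then 1 else if Suc a = i then -1 else 0)"

lemma Lm_carrier: "Lm N \<in> carrier_mat N N" unfolding Lm_def by simp

lemma det_Lm: "det (Lm N) = 1"
proof -
  have "det (Lm N) = prod_list (diag_mat (Lm N))"
    by (rule det_lower_triangular[OF _ Lm_carrier]) (auto simp: Lm_def)
  also have "diag_mat (Lm N) = map (\<lambda>_. 1) [0..<N]"
    unfolding diag_mat_def by (auto simp: Lm_def)
  moreover have "\<And>xs. prod_list (map (\<lambda>_. 1::real) xs) = 1" by (induct_tac xs) auto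
  ultimately show ?thesis by simp
qed

lemma Lsum: assumes "i < N" "\<omega> \<in> space M"
  shows "(\<Sum>a<N. Lm N $$ (i,a) * B (real (Suc a) * h) \<omega>) = grid_incr B h (Suc i) \<omega>"
proof (cases i)
  case 0
  have "(\<Sum>a<N. Lm N $$ (i,a) * B (real (Suc a) * h) \<omega>) = (\<Sum>a<N. if a = 0 then B (real (Suc a) * h) \<omega> else 0)"
    by (rule sum.cong) (use assms in \<open>auto simp: Lm_def 0\<close>)
  also have "\<dots> = B h \<omega>" using assms by simp
  finally show ?thesis using B0 assms by (simp add: grid_incr_def 0)
next
  case (Suc k)
  have "(\<Sum>a<N. Lm N $$ (i,a) * B (real (Suc a) * h) \<omega>) = (\<Sum>a<N. (if a = i then B (real (Suc a) * h) \<omega> else 0)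
       + (if a = k then - B (real (Suc a) * h) \<omega> else 0))"
    by (rule sum.cong) (use assms in \<open>auto simp: Lm_def Suc\<close>)
  also have "\<dots> = B (real (Suc i) * h) \<omega> - B (real (Suc k) * h) \<omega>"
    using assms Suc by (simp add: sum.distrib)
  finally show ?thesis by (simp add: grid_incr_def Suc)
qed

abbreviation Cm where "Cm N \<equiv> cov_matrix M (\<lambda>k. B (real k * h)) N"

lemma Cm_entry: "a < N \<Longrightarrow> b < N \<Longrightarrow>
  Cm N $$ (a,b) = (\<integral>\<omega>. B (real (Suc a) * h) \<omega> * B (real (Suc b) * h) \<omega> \<partial>M)"
  unfolding cov_matrix_def cov_def using Bint hpos by simp

lemma Cm_carrier: "Cm N \<in> carrier_mat N N" unfolding cov_matrix_def by simp

lemma Gamma_LCL: "Gamma_mat M B h N = Lm N * Cm N * transpose_mat (Lm N)"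
proof (rule eq_matI)
  fix i j assume ij: "i < dim_row (Lm N * Cm N * transpose_mat (Lm N))" "j < dim_col (Lm N * Cm N * transpose_mat (Lm N))"
  then have i: "i < N" and j: "j < N" using Lm_carrier[of N] Cm_carrier[of N] by auto
  have "(Lm N * Cm N * transpose_mat (Lm N)) $$ (i,j) = (\<Sum>a<N. \<Sum>b<N. Lm N $$ (i,a) * (Cm N $$ (a,b) * Lm N $$ (j,b)))"
    using i j Lm_carrier[of N] Cm_carrier[of N] by (simp add: scalar_prod_def atLeast0LessThan sum_distrib_left)
  also have "\<dots> = (\<Sum>a<N. \<Sum>b<N. Lm N $$ (i,a) * Lm N $$ (j,b) *
       (\<integral>\<omega>. B (real (Suc a) * h) \<omega> * B (real (Suc b) * h) \<omega> \<partial>M))"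
    by (intro sum.cong refl) (simp add: Cm_entry)
  also have "\<dots> = (\<integral>\<omega>. (\<Sum>a<N. Lm N $$ (i,a) * B (real (Suc a) * h) \<omega>) *
        (\<Sum>b<N. Lm N $$ (j,b) * B (real (Suc b) * h) \<omega>) \<partial>M)"
    by (rule E_bilin(2)[where X="\<lambda>a. B (real (Suc a) * h)", symmetric]) (use hpos in \<open>auto intro: Bm Bsq\<close>)
  also have "\<dots> = EE i j"
    unfolding EE_def by (rule Bochner_Integration.integral_cong) (auto simp: Lsum[OF i] Lsum[OF j] simp del: of_nat_Suc)
  finally show "Gamma_mat M B h N $$ (i,j) = (Lm N * Cm N * transpose_mat (Lm N)) $$ (i,j)"
    using Gamma_entry i j by simp
qed (use Gamma_carrier[of N] Lm_carrier[of N] Cm_carrier[of N] in auto)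

lemma det_Gamma: "det (Gamma_mat M B h N) = det (Cm N)"
proof -
  have "det (Gamma_mat M B h N) = det (Lm N * Cm N) * det (transpose_mat (Lm N))"
    unfolding Gamma_LCL by (rule det_mult) (use mult_carrier_mat[OF Lm_carrier Cm_carrier] Lm_carrier in auto)
  also have "\<dots> = det (Cm N)"
    using det_mult[OF Lm_carrier Cm_carrier] det_Lm det_transpose[OF Lm_carrier] by simp
  finally show ?thesis .
qed

lemma mse_bound:
  assumes N: "N \<ge> 1" and dC: "det (Cm N) \<noteq> 0"
  shows "0 \<le> (\<integral>\<omega>. (mle_theta M B \<theta> h N \<omega> - \<theta>)^2 \<partial>M)"
    "(\<integral>\<omega>. (mle_theta M B \<theta> h N \<omega> - \<theta>)^2 \<partial>M) \<le> (\<Sum>i<N. \<Sum>j<N. EE i j) / (real N ^ 2 * h ^ 2)"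
proof -
  interpret prob_space M by (rule ps)
  let ?\<Gamma> = "Gamma_mat M B h N"
  define G where "G = mat_inv ?\<Gamma>"
  have dG: "det ?\<Gamma> \<noteq> 0" using det_Gamma dC by simp
  note GP = mat_inv_props[OF Gamma_carrier dG, folded G_def]
  define u where "u j = (\<Sum>i<N. h * G $$ (i,j))" for j
  define q where "q = (\<Sum>j<N. u j * h)"
  define S where "S = (\<Sum>i<N. \<Sum>j<N. EE i j)"
  have GE: "(\<Sum>j<N. G $$ (i,j) * EE j k) = (if i = k then 1 else 0)" if ik: "i < N" "k < N" for i k
  proof -
    have "(G * ?\<Gamma>) $$ (i,k) = (\<Sum>j<N. G $$ (i,j) * ?\<Gamma> $$ (j,k))"
      using GP(1) Gamma_carrier[of N] ik by (simp add: scalar_prod_def atLeast0LessThan)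
    also have "\<dots> = (\<Sum>j<N. G $$ (i,j) * EE j k)"
      by (intro sum.cong refl) (simp add: Gamma_entry ik)
    finally show ?thesis using GP(3) ik by simp
  qed
  have uE: "(\<Sum>j<N. u j * EE j k) = h" if k: "k < N" for k
  proof -
    have "(\<Sum>j<N. u j * EE j k) = (\<Sum>i<N. h * (\<Sum>j<N. G $$ (i,j) * EE j k))"
      unfolding u_def sum_distrib_right sum_distrib_left by (subst sum.swap) (simp add: mult.assoc)
    also have "\<dots> = (\<Sum>i<N. if i = k then h else 0)"
      by (intro sum.cong refl) (simp add: GE k)
    also have "\<dots> = h" using k by simp
    finally show ?thesis .
  qed
  have Qu: "(\<Sum>i<N. \<Sum>j<N. u i * u j * EE i j) = q"
  proof -
    have "(\<Sum>i<N. \<Sum>j<N. u i * u j * EE i j) = (\<Sum>j<N. u j * (\<Sum>i<N. u i * EE i j))"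
      by (subst sum.swap) (simp add: sum_distrib_left algebra_simps)
    also have "\<dots> = (\<Sum>j<N. u j * h)" by (intro sum.cong refl) (simp add: uE)
    finally show ?thesis unfolding q_def .
  qed
  have Qz: "(\<Sum>i<N. \<Sum>j<N. u i * h * EE i j) = real N * h^2"
  proof -
    have "(\<Sum>i<N. \<Sum>j<N. u i * h * EE i j) = (\<Sum>j<N. h * (\<Sum>i<N. u i * EE i j))"
      by (subst sum.swap) (simp add: sum_distrib_left algebra_simps)
    also have "\<dots> = (\<Sum>j<N. h * h)" by (intro sum.cong refl) (simp add: uE)
    finally show ?thesis by (simp add: power2_eq_square)
  qed
  have Qzz: "(\<Sum>i<N. \<Sum>j<N. h * h * EE i j) = h^2 * S"
    unfolding S_def by (simp add: sum_distrib_left power2_eq_square)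
  have "(real N * h^2)^2 \<le> q * (h^2 * S)"
  proof -
    have "\<And>t. 0 \<le> q + 2 * t * (real N * h^2) + t^2 * (h^2 * S)"
    proof -
      fix t
      have "0 \<le> (\<Sum>i<N. \<Sum>j<N. (u i + t * h) * (u j + t * h) * EE i j)" by (rule EE_psd)
      also have "\<dots> = q + 2 * t * (real N * h^2) + t^2 * (h^2 * S)"
        using quad_expand[where E=EE and N=N and a=u and t=t and b="\<lambda>_. h", OF EE_sym] Qu Qz Qzz by simp
      finally show "0 \<le> q + 2 * t * (real N * h^2) + t^2 * (h^2 * S)" .
    qed
    then show ?thesis by (rule cs_real)
  qed
  moreover have q0: "q \<ge> 0" using EE_psd[where N=N and a=u] Qu by simp
  moreover have "(real N * h^2)^2 > 0" using N hpos by simp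
  ultimately have qpos: "q > 0" by (cases "q = 0") auto
  have bnd: "1 / q \<le> S / (real N ^ 2 * h ^ 2)"
  proof -
    have "1 / q \<le> (h^2 * S) / (real N * h^2)^2"
      using \<open>(real N * h^2)^2 \<le> q * (h^2 * S)\<close> qpos \<open>(real N * h^2)^2 > 0\<close>
      by (simp add: field_simps)
    also have "\<dots> = S / (real N ^ 2 * h ^ 2)" using hpos by (simp add: field_simps power2_eq_square)
    finally show ?thesis .
  qed
  define U where "U \<omega> = (\<Sum>j<N. u j * grid_incr B h (Suc j) \<omega>)" for \<omega>
  have mle: "mle_theta M B \<theta> h N \<omega> - \<theta> = U \<omega> / q" for \<omega>
  proof -
    have gX: "grid_incr (\<lambda>t \<omega>. \<theta> * t + B t \<omega>) h (Suc j) \<omega> = \<theta> * h + grid_incr B h (Suc j) \<omega>" for j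
      by (simp add: grid_incr_def algebra_simps)
    have "mle_theta M B \<theta> h N \<omega> = (\<Sum>j<N. u j * (\<theta> * h + grid_incr B h (Suc j) \<omega>)) / q"
      unfolding mle_theta_def Let_def G_def[symmetric] sp_lemma[OF GP(1)] gX
      by (simp add: u_def q_def)
    also have "\<dots> = (\<theta> * q + U \<omega>) / q"
      by (simp add: U_def q_def algebra_simps sum.distrib sum_distrib_left)
    finally show ?thesis using qpos by (simp add: field_simps)
  qed
  have "(\<integral>\<omega>. (mle_theta M B \<theta> h N \<omega> - \<theta>)^2 \<partial>M) = (\<integral>\<omega>. U \<omega> * U \<omega> \<partial>M) / q^2"
    unfolding mle by (simp add: power_divide power2_eq_square)
  also have "(\<integral>\<omega>. U \<omega> * U \<omega> \<partial>M) = q"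
    unfolding U_def Qu[symmetric] EE_def by (rule E_bilin(2)) (auto intro: Dm Dsq)
  finally have eq: "(\<integral>\<omega>. (mle_theta M B \<theta> h N \<omega> - \<theta>)^2 \<partial>M) = 1 / q"
    using qpos by (simp add: power2_eq_square)
  show "0 \<le> (\<integral>\<omega>. (mle_theta M B \<theta> h N \<omega> - \<theta>)^2 \<partial>M)" using eq qpos by simp
  show "(\<integral>\<omega>. (mle_theta M B \<theta> h N \<omega> - \<theta>)^2 \<partial>M) \<le> (\<Sum>i<N. \<Sum>j<N. EE i j) / (real N ^ 2 * h ^ 2)"
    using eq bnd unfolding S_def by simp
qed

lemma mse_lim:
  assumes dC: "\<forall>N\<ge>1. det (Cm N) \<noteq> 0" and rl: "r \<longlonglongrightarrow> 0"
  shows "(\<lambda>N. \<integral>\<omega>. (mle_theta M B \<theta> h N \<omega> - \<theta>)^2 \<partial>M) \<longlonglongrightarrow> 0"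
proof -
  define g where "g N = 2 / h^2 * ((\<Sum>k<N. \<bar>r k\<bar>) / real N)" for N
  have c: "(\<lambda>N. (\<Sum>k<N. \<bar>r k\<bar>) / real N) \<longlonglongrightarrow> 0"
    by (rule cesaro0) (use tendsto_rabs_zero[OF rl] in auto)
  have g: "g \<longlonglongrightarrow> 0" unfolding g_def using tendsto_mult[OF tendsto_const c, of "2 / h^2"] by simp
  show ?thesis
  proof (rule Lim_null_comparison[OF _ g])
    show "\<forall>\<^sub>F N in sequentially. norm (\<integral>\<omega>. (mle_theta M B \<theta> h N \<omega> - \<theta>)^2 \<partial>M) \<le> g N"
      unfolding eventually_sequentially
    proof (intro exI[of _ 1] allI impI)
      fix N :: nat assume N: "1 \<le> N"
      note mb = mse_bound[OF N dC[rule_format, OF N], of \<theta>]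
      have "(\<Sum>i<N. \<Sum>j<N. EE i j) \<le> (\<Sum>i<N. \<Sum>j<N. \<bar>r (if j \<le> i then i - j else j - i)\<bar>)"
        by (intro sum_mono) (simp add: EE_r)
      also have "\<dots> \<le> 2 * real N * (\<Sum>k<N. \<bar>r k\<bar>)" by (rule double_bound) simp
      finally have S: "(\<Sum>i<N. \<Sum>j<N. EE i j) \<le> 2 * real N * (\<Sum>k<N. \<bar>r k\<bar>)" .
      have pos: "real N ^ 2 * h ^ 2 > 0" using N hpos by simp
      have "(\<Sum>i<N. \<Sum>j<N. EE i j) / (real N ^ 2 * h ^ 2) \<le> 2 * real N * (\<Sum>k<N. \<bar>r k\<bar>) / (real N ^ 2 * h ^ 2)"
        using S pos by (simp add: divide_right_mono)
      also have "\<dots> = g N" unfolding g_def using N hpos by (simp add: field_simps power2_eq_square)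
      finally show "norm (\<integral>\<omega>. (mle_theta M B \<theta> h N \<omega> - \<theta>)^2 \<partial>M) \<le> g N"
        using mb by simp
    qed
  qed
qed

end

theorem theorem2p5:
  fixes M :: "'a measure" and B :: "real \<Rightarrow> 'a \<Rightarrow> real" and \<theta> h :: real
  assumes "prob_space M"
    and "gaussian_process M B" and "centered_process M B" and "stationary_increments M B"
    and "\<forall>\<omega>\<in>space M. B 0 \<omega> = 0"
    and "h > 0"
    and "\<forall>N\<ge>1. det (cov_matrix M (\<lambda>k. B (real k * h)) N) \<noteq> 0"
    and "(\<lambda>k::nat. \<integral>\<omega>. (B (real (Suc k) * h) \<omega> - B (real k * h) \<omega>) * B h \<omega> \<partial>M)
           \<longlonglongrightarrow> 0"
  shows "(\<lambda>N. \<integral>\<omega>. (mle_theta M B \<theta> h N \<omega> - \<theta>)\<^sup>2 \<partial>M) \<longlonglongrightarrow> 0"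
proof -
  interpret gsetup M B h by (rule gsetup.intro) (use assms in auto)
  have "r = (\<lambda>k::nat. \<integral>\<omega>. (B (real (Suc k) * h) \<omega> - B (real k * h) \<omega>) * B h \<omega> \<partial>M)"
    by (rule ext) (simp add: r_def)
  then show ?thesis using mse_lim assms(7,8) by simp
qed

end
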